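(* Let $(A,\to,1)$ be an algebra of type $(2,0)$ satisfying (Re), (M) and (Ex). Then the properties (B), (BB) and ( * ) are pairwise equivalent for $(A,\to,1)$.
   Context: Properties, required for all $x,y,z\in A$: (Re) $x\to x=1$; (M) $1\to x=x$; (Ex) $x\to(y\to z)=y\to(x\to z)$; (B) $(y\to z)\to((x\to y)\to(x\to z))=1$; (BB) $(y\to z)\to((z\to x)\to(y\to x))=1$; ( * ) $y\to z=1$ implies $(x\to y)\to(x\to z)=1$. *)

theory Defs
  imports Main
begin

definition alg20 :: "'a set \<Rightarrow> ('a \<Rightarrow> 'a \<Rightarrow> 'a) \<Rightarrow> 'a \<Rightarrow> bool" where
  "alg20 A imp one \<longleftrightarrow> one \<in> A \<and> (\<forall>x\<in>A. \<forall>y\<in>A. imp x y \<in> A)"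

definition prop_Re :: "'a set \<Rightarrow> ('a \<Rightarrow> 'a \<Rightarrow> 'a) \<Rightarrow> 'a \<Rightarrow> bool" where
  "prop_Re A imp one \<longleftrightarrow> (\<forall>x\<in>A. imp x x = one)"

definition prop_M :: "'a set \<Rightarrow> ('a \<Rightarrow> 'a \<Rightarrow> 'a) \<Rightarrow> 'a \<Rightarrow> bool" where
  "prop_M A imp one \<longleftrightarrow> (\<forall>x\<in>A. imp one x = x)"

definition prop_Ex :: "'a set \<Rightarrow> ('a \<Rightarrow> 'a \<Rightarrow> 'a) \<Rightarrow> 'a \<Rightarrow> bool" where
  "prop_Ex A imp one \<longleftrightarrow> (\<forall>x\<in>A. \<forall>y\<in>A. \<forall>z\<in>A. imp x (imp y z) = imp y (imp x z))"

definition prop_B :: "'a set \<Rightarrow> ('a \<Rightarrow> 'a \<Rightarrow> 'a) \<Rightarrow> 'a \<Rightarrow> bool" where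
  "prop_B A imp one \<longleftrightarrow>
     (\<forall>x\<in>A. \<forall>y\<in>A. \<forall>z\<in>A. imp (imp y z) (imp (imp x y) (imp x z)) = one)"

definition prop_BB :: "'a set \<Rightarrow> ('a \<Rightarrow> 'a \<Rightarrow> 'a) \<Rightarrow> 'a \<Rightarrow> bool" where
  "prop_BB A imp one \<longleftrightarrow>
     (\<forall>x\<in>A. \<forall>y\<in>A. \<forall>z\<in>A. imp (imp y z) (imp (imp z x) (imp y x)) = one)"

definition prop_star :: "'a set \<Rightarrow> ('a \<Rightarrow> 'a \<Rightarrow> 'a) \<Rightarrow> 'a \<Rightarrow> bool" where
  "prop_star A imp one \<longleftrightarrow>
     (\<forall>x\<in>A. \<forall>y\<in>A. \<forall>z\<in>A. imp y z = one \<longrightarrow> imp (imp x y) (imp x z) = one)"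

end

theory Submission
  imports Defs
begin

theorem theorem2p2:
  fixes A :: "'a set" and imp :: "'a \<Rightarrow> 'a \<Rightarrow> 'a" and one :: 'a
  assumes "alg20 A imp one"
    and "prop_Re A imp one" and "prop_M A imp one" and "prop_Ex A imp one"
  shows "(prop_B A imp one \<longleftrightarrow> prop_BB A imp one)
       \<and> (prop_BB A imp one \<longleftrightarrow> prop_star A imp one)
       \<and> (prop_B A imp one \<longleftrightarrow> prop_star A imp one)"
proof -
  have cl: "\<And>x y. x \<in> A \<Longrightarrow> y \<in> A \<Longrightarrow> imp x y \<in> A" and o: "one \<in> A"
    using assms(1) unfolding alg20_def by auto
  have re: "\<And>x. x \<in> A \<Longrightarrow> imp x x = one" using assms(2) unfolding prop_Re_def by auto
  have m: "\<And>x. x \<in> A \<Longrightarrow> imp one x = x" using assms(3) unfolding prop_M_def by auto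
  have ex: "\<And>x y z. x \<in> A \<Longrightarrow> y \<in> A \<Longrightarrow> z \<in> A \<Longrightarrow> imp x (imp y z) = imp y (imp x z)"
    using assms(4) unfolding prop_Ex_def by auto
  have BBB: "prop_B A imp one \<longleftrightarrow> prop_BB A imp one"
  proof
    assume B: "prop_B A imp one"
    show "prop_BB A imp one" unfolding prop_BB_def
    proof (intro ballI)
      fix x y z assume h: "x \<in> A" "y \<in> A" "z \<in> A"
      have "imp (imp z x) (imp (imp y z) (imp y x)) = one" using B h unfolding prop_B_def by auto
      then show "imp (imp y z) (imp (imp z x) (imp y x)) = one" using ex cl h by metis
    qed
  next
    assume B: "prop_BB A imp one"
    show "prop_B A imp one" unfolding prop_B_def
    proof (intro ballI)
      fix x y z assume h: "x \<in> A" "y \<in> A" "z \<in> A"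
      have "imp (imp x y) (imp (imp y z) (imp x z)) = one" using B h unfolding prop_BB_def by auto
      then show "imp (imp y z) (imp (imp x y) (imp x z)) = one" using ex cl h by metis
    qed
  qed
  have BS: "prop_B A imp one \<longleftrightarrow> prop_star A imp one"
  proof
    assume B: "prop_B A imp one"
    show "prop_star A imp one" unfolding prop_star_def
    proof (intro ballI impI)
      fix x y z assume h: "x \<in> A" "y \<in> A" "z \<in> A" and e: "imp y z = one"
      have "imp (imp y z) (imp (imp x y) (imp x z)) = one" using B h unfolding prop_B_def by auto
      then show "imp (imp x y) (imp x z) = one" using e m cl h by metis
    qed
  next
    assume S: "prop_star A imp one"
    show "prop_B A imp one" unfolding prop_B_def
    proof (intro ballI)
      fix x y z assume h: "x \<in> A" "y \<in> A" "z \<in> A"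
      have "imp y (imp (imp y z) z) = imp (imp y z) (imp y z)" using ex cl h by metis
      also have "\<dots> = one" using re cl h by metis
      finally have "imp (imp x y) (imp x (imp (imp y z) z)) = one"
        using S h cl unfolding prop_star_def by blast
      moreover have "imp x (imp (imp y z) z) = imp (imp y z) (imp x z)" using ex cl h by metis
      ultimately have "imp (imp x y) (imp (imp y z) (imp x z)) = one" by simp
      then show "imp (imp y z) (imp (imp x y) (imp x z)) = one" using ex cl h by metis
    qed
  qed
  show ?thesis using BBB BS by blast
qed

end
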